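(* Let $C$ be a $d$-copula and let $C_1,\ldots,C_d$ be $2$-copulas whose tail dependence functions $\Lambda_{C_i}:=\Lambda(\cdot;C_i)$ exist and satisfy $$\lim_{s\searrow0}\int_0^\infty\Big|\partial_1C_i(st,sw)\,\mathbf{1}_{[0,1/s]}(t)-\partial_1\Lambda_{C_i}(t,w)\Big|\,dt=0$$ for all $w\in\mathbb{R}_+$ and all $i=1,\ldots,d$. Then for all $\mathbf{w}\in\mathbb{R}_+^d$, $$\phi_C(\Lambda_{C_1},\ldots,\Lambda_{C_d})(\mathbf{w})=\Lambda\big(\mathbf{w};\phi_C(C_1,\ldots,C_d)\big),$$ i.e. $\lim_{s\searrow0}\phi_C(C_1,\ldots,C_d)(s\mathbf{w})/s=\phi_C(\Lambda_{C_1},\ldots,\Lambda_{C_d})(\mathbf{w})$.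
   Context: A $d$-copula is a distribution function on $[0,1]^d$ with uniform margins. The tail dependence function of a $d$-copula $D$ is $\Lambda(\mathbf{w};D):=\lim_{s\searrow0}D(s\mathbf{w})/s$ for $\mathbf{w}\in\mathbb{R}_+^d$, $\mathbb{R}_+=[0,\infty)$, when the limit exists for all $\mathbf{w}$. For $2$-copulas $C_1,\ldots,C_d$ the generalized Markov product induced by $C$ is the $d$-copula $\phi_C(C_1,\ldots,C_d)(v_1,\ldots,v_d):=\int_0^1C(\partial_1C_1(t,v_1),\ldots,\partial_1C_d(t,v_d))\,dt$. For bivariate tail dependence functions $\Lambda_1,\ldots,\Lambda_d$, $\phi_C(\Lambda_1,\ldots,\Lambda_d)(w_1,\ldots,w_d):=\int_0^\infty C(\partial_1\Lambda_1(t,w_1),\ldots,\partial_1\Lambda_d(t,w_d))\,dt$. Partial derivatives are defined almost everywhere. *)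

theory Defs
  imports "HOL-Analysis.Analysis"
begin

text \<open>d-copulas, indexed by a finite type 'd (d = CARD('d)); points of [0,1]^d are
  functions 'd \<Rightarrow> real.\<close>

definition unit_cube :: "('d \<Rightarrow> real) set" where
  "unit_cube = {u. \<forall>i. 0 \<le> u i \<and> u i \<le> 1}"

definition copula :: "((('d::finite) \<Rightarrow> real) \<Rightarrow> real) \<Rightarrow> bool" where
  "copula C \<longleftrightarrow>
     (\<forall>u\<in>unit_cube. (\<exists>i. u i = 0) \<longrightarrow> C u = 0) \<and>
     (\<forall>u\<in>unit_cube. \<forall>i. (\<forall>j. j \<noteq> i \<longrightarrow> u j = 1) \<longrightarrow> C u = u i) \<and>
     (\<forall>a\<in>unit_cube. \<forall>b\<in>unit_cube. (\<forall>i. a i \<le> b i) \<longrightarrow>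
        0 \<le> (\<Sum>S\<in>Pow (UNIV::'d set). (-1) ^ card S * C (\<lambda>i. if i \<in> S then a i else b i)))"

definition copula2 :: "(real \<Rightarrow> real \<Rightarrow> real) \<Rightarrow> bool" where
  "copula2 C \<longleftrightarrow>
     (\<forall>u\<in>{0..1}. C u 0 = 0 \<and> C 0 u = 0 \<and> C u 1 = u \<and> C 1 u = u) \<and>
     (\<forall>u1\<in>{0..1}. \<forall>u2\<in>{0..1}. \<forall>v1\<in>{0..1}. \<forall>v2\<in>{0..1}. u1 \<le> u2 \<longrightarrow> v1 \<le> v2 \<longrightarrow>
        0 \<le> C u2 v2 - C u2 v1 - C u1 v2 + C u1 v1)"

text \<open>Partial derivative in the first argument; set to 0 where it does not exist
  (it exists almost everywhere in the relevant cases, so the convention is immaterial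
  inside integrals).\<close>
definition partial1 :: "(real \<Rightarrow> real \<Rightarrow> real) \<Rightarrow> real \<Rightarrow> real \<Rightarrow> real" where
  "partial1 f t v = (if (\<lambda>x. f x v) differentiable (at t) then deriv (\<lambda>x. f x v) t else 0)"

definition has_tdf2 :: "(real \<Rightarrow> real \<Rightarrow> real) \<Rightarrow> bool" where
  "has_tdf2 C \<longleftrightarrow> (\<forall>t\<ge>0. \<forall>w\<ge>0. \<exists>L. ((\<lambda>s. C (s * t) (s * w) / s) \<longlongrightarrow> L) (at_right 0))"

definition tdf2 :: "(real \<Rightarrow> real \<Rightarrow> real) \<Rightarrow> real \<Rightarrow> real \<Rightarrow> real" where
  "tdf2 C t w = Lim (at_right 0) (\<lambda>s. C (s * t) (s * w) / s)"

definition markov_prod ::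
  "(('d::finite \<Rightarrow> real) \<Rightarrow> real) \<Rightarrow> ('d \<Rightarrow> real \<Rightarrow> real \<Rightarrow> real) \<Rightarrow> ('d \<Rightarrow> real) \<Rightarrow> real" where
  "markov_prod C Cs v = (LBINT t:{0..1}. C (\<lambda>i. partial1 (Cs i) t (v i)))"

definition markov_prod_tdf ::
  "(('d::finite \<Rightarrow> real) \<Rightarrow> real) \<Rightarrow> ('d \<Rightarrow> real \<Rightarrow> real \<Rightarrow> real) \<Rightarrow> ('d \<Rightarrow> real) \<Rightarrow> real" where
  "markov_prod_tdf C Ls w = (LBINT t:{0..}. C (\<lambda>i. partial1 (Ls i) t (w i)))"

end

theory Submission
  imports Defs
begin

lemma cube_upd: "u \<in> unit_cube \<Longrightarrow> 0 \<le> x \<Longrightarrow> x \<le> 1 \<Longrightarrow> u(i:=x) \<in> unit_cube"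
  by (auto simp: unit_cube_def)

lemma copD_ground:
  assumes "copula C" "u \<in> unit_cube" "u i = 0" shows "C u = 0"
proof -
  have "\<forall>u\<in>unit_cube. (\<exists>i. u i = 0) \<longrightarrow> C u = 0" using assms(1) unfolding copula_def by (rule conjunct1)
  then show ?thesis using assms(2,3) by blast
qed

lemma copD_marg:
  assumes "copula C" "u \<in> unit_cube" "\<And>j. j \<noteq> i \<Longrightarrow> u j = 1" shows "C u = u i"
proof -
  have "\<forall>u\<in>unit_cube. \<forall>i. (\<forall>j. j \<noteq> i \<longrightarrow> u j = 1) \<longrightarrow> C u = u i"
    using assms(1) unfolding copula_def by (elim conjE)
  then show ?thesis using assms(2,3) by blast
qed

lemma copD_box:
  fixes C :: "('d::finite \<Rightarrow> real) \<Rightarrow> real"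
  assumes "copula C" "a \<in> unit_cube" "b \<in> unit_cube" "\<And>i. a i \<le> b i"
  shows "0 \<le> (\<Sum>S\<in>Pow (UNIV::'d set). (-1) ^ card S * C (\<lambda>i. if i \<in> S then a i else b i))"
proof -
  have "\<forall>a\<in>unit_cube. \<forall>b\<in>unit_cube. (\<forall>i. a i \<le> b i) \<longrightarrow>
        0 \<le> (\<Sum>S\<in>Pow (UNIV::'d set). (-1) ^ card S * C (\<lambda>i. if i \<in> S then a i else b i))"
    using assms(1) unfolding copula_def by (elim conjE)
  then show ?thesis using assms(2,3,4) by blast
qed

lemma box_reduce:
  fixes C :: "('d::finite \<Rightarrow> real) \<Rightarrow> real"
  assumes cop: "copula C" and a: "a \<in> unit_cube" and b: "b \<in> unit_cube" and ab: "\<And>i. a i \<le> b i"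
    and T: "\<And>k. k \<notin> T \<Longrightarrow> a k = 0"
  shows "0 \<le> (\<Sum>S\<in>Pow T. (-1) ^ card S * C (\<lambda>i. if i \<in> S then a i else b i))"
proof -
  have 0: "0 \<le> (\<Sum>S\<in>Pow (UNIV::'d set). (-1) ^ card S * C (\<lambda>i. if i \<in> S then a i else b i))"
    using copD_box[OF cop a b ab] .
  have "(\<Sum>S\<in>Pow (UNIV::'d set). (-1) ^ card S * C (\<lambda>i. if i \<in> S then a i else b i))
      = (\<Sum>S\<in>Pow T. (-1) ^ card S * C (\<lambda>i. if i \<in> S then a i else b i))"
  proof (rule sum.mono_neutral_right)
    show "\<forall>S\<in>Pow UNIV - Pow T. (-1) ^ card S * C (\<lambda>i. if i \<in> S then a i else b i) = 0"
    proof
      fix S assume "S \<in> Pow (UNIV::'d set) - Pow T"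
      then obtain k where k: "k \<in> S" "k \<notin> T" by auto
      have "(\<lambda>i. if i \<in> S then a i else b i) \<in> unit_cube" using a b by (auto simp: unit_cube_def)
      moreover have "(\<lambda>i. if i \<in> S then a i else b i) k = 0" using k T by auto
      ultimately have "C (\<lambda>i. if i \<in> S then a i else b i) = 0" by (rule copD_ground[OF cop])
      then show "(-1) ^ card S * C (\<lambda>i. if i \<in> S then a i else b i) = 0" by simp
    qed
  qed auto
  with 0 show ?thesis by simp
qed

lemma cop_mono:
  fixes C :: "('d::finite \<Rightarrow> real) \<Rightarrow> real"
  assumes cop: "copula C" and u: "u \<in> unit_cube" and x: "0 \<le> x" "x \<le> u i"
  shows "C (u(i:=x)) \<le> C u"
proof -
  have "0 \<le> (\<Sum>S\<in>Pow {i}. (-1) ^ card S * C (\<lambda>k. if k \<in> S then (\<lambda>k. if k = i then x else 0) k else u k))"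
    using u x unfolding unit_cube_def by (intro box_reduce[OF cop _ u]) (auto simp: unit_cube_def, smt (verit))
  moreover have "Pow {i} = {{}, {i}}" by auto
  moreover have "(\<lambda>k. if k \<in> {i} then (\<lambda>k. if k = i then x else 0) k else u k) = u(i:=x)" by auto
  ultimately show ?thesis by simp
qed

lemma cop_2inc:
  fixes C :: "('d::finite \<Rightarrow> real) \<Rightarrow> real"
  assumes cop: "copula C" and u: "u \<in> unit_cube" and x: "0 \<le> x" "x \<le> u i" and ij: "i \<noteq> j"
   and y: "u j \<le> y" "y \<le> 1"
  shows "C u - C (u(i:=x)) \<le> C (u(j:=y)) - C (u(i:=x, j:=y))"
proof -
  let ?a = "\<lambda>k. if k = i then x else if k = j then u j else 0"
  have "0 \<le> (\<Sum>S\<in>Pow {i,j}. (-1) ^ card S * C (\<lambda>k. if k \<in> S then ?a k else (u(j:=y)) k))"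
    using u x y unfolding unit_cube_def by (intro box_reduce[OF cop _ cube_upd[OF u]]) (auto simp: unit_cube_def, (smt (verit))+)
  moreover have "Pow {i,j} = {{}, {i}, {j}, {i,j}}" by (auto simp: Pow_insert)
  moreover have "(\<lambda>k. if k \<in> {} then ?a k else (u(j:=y)) k) = u(j:=y)" by auto
  moreover have "(\<lambda>k. if k \<in> {i} then ?a k else (u(j:=y)) k) = u(i:=x, j:=y)" using ij by auto
  moreover have "(\<lambda>k. if k \<in> {j} then ?a k else (u(j:=y)) k) = u" using ij by auto
  moreover have "(\<lambda>k. if k \<in> {i,j} then ?a k else (u(j:=y)) k) = u(i:=x)" using ij by auto
  ultimately show ?thesis using ij by (simp add: insert_commute)
qed

lemma cop_lip1:
  fixes C :: "('d::finite \<Rightarrow> real) \<Rightarrow> real"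
  assumes cop: "copula C" and u: "u \<in> unit_cube" and x: "0 \<le> x" "x \<le> u i"
  shows "C u - C (u(i:=x)) \<le> u i - x"
proof -
  define q where "q S = (\<lambda>k. if k \<in> S then 1 else u k)" for S :: "'d set"
  have q_cube: "q S \<in> unit_cube" for S using u unfolding q_def unit_cube_def by simp
  have step: "S \<subseteq> - {i} \<Longrightarrow> C u - C (u(i:=x)) \<le> C (q S) - C ((q S)(i:=x))" for S
  proof (induction S rule: infinite_finite_induct)
    case (infinite S) then show ?case by simp
  next
    case empty then show ?case by (simp add: q_def)
  next
    case (insert j S)
    then have ij: "i \<noteq> j" and S: "S \<subseteq> - {i}" by auto
    have qi: "q S i = u i" using S unfolding q_def by auto
    have xq: "x \<le> q S i" using qi x by simp
    have qj: "q S j \<le> 1" using q_cube[of S] unfolding unit_cube_def by blast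
    have c: "C (q S) - C ((q S)(i:=x)) \<le> C ((q S)(j:=1)) - C ((q S)(i:=x, j:=1))"
      by (rule cop_2inc[OF cop q_cube x(1) xq ij qj order_refl])
    have e1: "(q S)(j:=1) = q (insert j S)" by (rule ext) (simp add: q_def)
    have e2: "(q S)(i:=x, j:=1) = (q (insert j S))(i:=x)" using ij by (intro ext) (simp add: q_def)
    have "C (q S) - C ((q S)(i:=x)) \<le> C (q (insert j S)) - C ((q (insert j S))(i:=x))"
      using c by (simp only: e1 e2)
    moreover have "C u - C (u(i:=x)) \<le> C (q S) - C ((q S)(i:=x))" by (rule insert.IH[OF S])
    ultimately show ?case by linarith
  qed
  have st: "C u - C (u(i:=x)) \<le> C (q (-{i})) - C ((q (-{i}))(i:=x))" by (rule step) simp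
  have "u i \<le> 1" using u unfolding unit_cube_def by simp
  then have x1: "x \<le> 1" using x by linarith
  have m1: "C (q (-{i})) = q (-{i}) i"
    by (rule copD_marg[OF cop q_cube]) (simp add: q_def)
  have m2: "C ((q (-{i}))(i:=x)) = ((q (-{i}))(i:=x)) i"
    by (rule copD_marg[OF cop cube_upd[OF q_cube x(1) x1]]) (simp add: q_def)
  have "q (-{i}) i = u i" by (simp add: q_def)
  then show ?thesis using st m1 m2 by simp
qed

lemma cop_lip1_abs:
  fixes C :: "('d::finite \<Rightarrow> real) \<Rightarrow> real"
  assumes cop: "copula C" and u: "u \<in> unit_cube" and x: "0 \<le> x" "x \<le> 1"
  shows "\<bar>C (u(i:=x)) - C u\<bar> \<le> \<bar>x - u i\<bar>"
proof (cases "x \<le> u i")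
  case True
  then show ?thesis using cop_lip1[OF cop u x(1) True] cop_mono[OF cop u x(1) True] by simp
next
  case False
  let ?v = "u(i:=x)"
  have v: "?v \<in> unit_cube" by (rule cube_upd[OF u x])
  have u0: "0 \<le> u i" "u i \<le> x" using u False by (auto simp: unit_cube_def)
  have "?v(i:= u i) = u" by simp
  then show ?thesis using cop_lip1[OF cop v, of "u i" i] cop_mono[OF cop v, of "u i" i] u0 by simp
qed

lemma cop_lip:
  fixes C :: "('d::finite \<Rightarrow> real) \<Rightarrow> real"
  assumes cop: "copula C" and a: "a \<in> unit_cube" and b: "b \<in> unit_cube"
  shows "\<bar>C a - C b\<bar> \<le> (\<Sum>i\<in>UNIV. \<bar>a i - b i\<bar>)"
proof -
  define p where "p S = (\<lambda>k. if k \<in> S then a k else b k)" for S :: "'d set"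
  have p_cube: "p S \<in> unit_cube" for S using a b by (auto simp: p_def unit_cube_def)
  have "\<bar>C (p S) - C b\<bar> \<le> (\<Sum>i\<in>S. \<bar>a i - b i\<bar>)" for S
  proof (induction S rule: infinite_finite_induct)
    case (infinite S) then show ?case by simp
  next
    case empty then show ?case by (simp add: p_def)
  next
    case (insert j S)
    have "p (insert j S) = (p S)(j := a j)" by (auto simp: p_def)
    moreover have "p S j = b j" using insert by (auto simp: p_def)
    moreover have "0 \<le> a j" "a j \<le> 1" using a by (auto simp: unit_cube_def)
    ultimately have "\<bar>C (p (insert j S)) - C (p S)\<bar> \<le> \<bar>a j - b j\<bar>"
      using cop_lip1_abs[OF cop p_cube, of "a j" S j] by simp
    then show ?case using insert by simp
  qed
  from this[of UNIV] show ?thesis by (simp add: p_def)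
qed

lemma cop_bound:
  fixes C :: "('d::finite \<Rightarrow> real) \<Rightarrow> real"
  assumes cop: "copula C" and u: "u \<in> unit_cube"
  shows "\<bar>C u\<bar> \<le> u i"
proof -
  have c0: "u(i:=0) \<in> unit_cube" by (rule cube_upd[OF u]) auto
  have "(u(i:=0)) i = 0" by simp
  then have "C (u(i:=0)) = 0" by (rule copD_ground[OF cop c0])
  moreover have "\<bar>C (u(i:=0)) - C u\<bar> \<le> \<bar>0 - u i\<bar>" by (rule cop_lip1_abs[OF cop u]) auto
  ultimately show ?thesis using u by (auto simp: unit_cube_def)
qed



definition cl :: "real \<Rightarrow> real" where "cl x = max 0 (min 1 x)"

lemma cl_props: "0 \<le> cl x" "cl x \<le> 1" "x \<le> y \<Longrightarrow> cl x \<le> cl y" "x \<le> y \<Longrightarrow> cl y - cl x \<le> y - x"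
  "0 \<le> x \<Longrightarrow> x \<le> 1 \<Longrightarrow> cl x = x"
  by (auto simp: cl_def)

definition mlip :: "(real \<Rightarrow> real) \<Rightarrow> bool" where
  "mlip g \<longleftrightarrow> (\<forall>x y. x \<le> y \<longrightarrow> g x \<le> g y \<and> g y - g x \<le> y - x)"

lemma c2_mono:
  assumes c: "copula2 D" and v: "0 \<le> v" "v \<le> 1" and xy: "0 \<le> x" "x \<le> y" "y \<le> 1"
  shows "D x v \<le> D y v" "D y v - D x v \<le> y - x"
proof -
  have cc: "(\<forall>u\<in>{0..1}. D u 0 = 0 \<and> D 0 u = 0 \<and> D u 1 = u \<and> D 1 u = u) \<and>
     (\<forall>u1\<in>{0..1}. \<forall>u2\<in>{0..1}. \<forall>v1\<in>{0..1}. \<forall>v2\<in>{0..1}. u1 \<le> u2 \<longrightarrow> v1 \<le> v2 \<longrightarrow>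
        0 \<le> D u2 v2 - D u2 v1 - D u1 v2 + D u1 v1)" using c unfolding copula2_def .
  have xi: "x \<in> {0..1}" and yi: "y \<in> {0..1}" and vi: "v \<in> {0..1}" using xy v by auto
  have z: "(0::real) \<in> {0..1}" and on: "(1::real) \<in> {0..1}" by auto
  have bx: "D x 0 = 0" "D x 1 = x" using bspec[OF conjunct1[OF cc] xi] by auto
  have byy: "D y 0 = 0" "D y 1 = y" using bspec[OF conjunct1[OF cc] yi] by auto
  have r: "\<forall>v1\<in>{0..1}. \<forall>v2\<in>{0..1}. v1 \<le> v2 \<longrightarrow> 0 \<le> D y v2 - D y v1 - D x v2 + D x v1"
    using bspec[OF bspec[OF conjunct2[OF cc] xi] yi] xy by blast
  have "0 \<le> D y v - D y 0 - D x v + D x 0" using bspec[OF bspec[OF r z] vi] v by blast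
  then show "D x v \<le> D y v" using bx byy by linarith
  have "0 \<le> D y 1 - D y v - D x 1 + D x v" using bspec[OF bspec[OF r vi] on] v by blast
  then show "D y v - D x v \<le> y - x" using bx byy by linarith
qed

lemma c2_mlip:
  assumes c: "copula2 D" and v: "0 \<le> v" "v \<le> 1"
  shows "mlip (\<lambda>x. D (cl x) v)"
  unfolding mlip_def
proof (intro allI impI)
  fix x y :: real assume "x \<le> y"
  then have h: "0 \<le> cl x" "cl x \<le> cl y" "cl y \<le> 1" "cl y - cl x \<le> y - x"
    using cl_props(1)[of x] cl_props(3)[of x y] cl_props(2)[of y] cl_props(4)[of x y] by simp_all
  then show "D (cl x) v \<le> D (cl y) v \<and> D (cl y) v - D (cl x) v \<le> y - x"
    using c2_mono[OF c v h(1) h(2) h(3)] h(4) by linarith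
qed

lemma tdf2_lim:
  assumes "has_tdf2 D" "0 \<le> t" "0 \<le> w"
  shows "((\<lambda>s. D (s * t) (s * w) / s) \<longlongrightarrow> tdf2 D t w) (at_right 0)"
proof -
  obtain L where L: "((\<lambda>s. D (s * t) (s * w) / s) \<longlongrightarrow> L) (at_right 0)"
    using assms unfolding has_tdf2_def by blast
  moreover have "Lim (at_right 0) (\<lambda>s. D (s * t) (s * w) / s) = L"
    by (rule tendsto_Lim[OF trivial_limit_at_right_real L])
  ultimately show ?thesis unfolding tdf2_def by simp
qed

lemma tdf2_mono:
  assumes c: "copula2 D" and h: "has_tdf2 D" and w: "0 \<le> w" and t: "0 \<le> t1" "t1 \<le> t2"
  shows "tdf2 D t1 w \<le> tdf2 D t2 w \<and> tdf2 D t2 w - tdf2 D t1 w \<le> t2 - t1"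
proof -
  have l1: "((\<lambda>s. D (s * t1) (s * w) / s) \<longlongrightarrow> tdf2 D t1 w) (at_right 0)"
    and l2: "((\<lambda>s. D (s * t2) (s * w) / s) \<longlongrightarrow> tdf2 D t2 w) (at_right 0)"
    using tdf2_lim[OF h] t w by auto
  have ev: "\<forall>\<^sub>F s in at_right 0. 0 < s \<and> s < 1 / (1 + t2 + w)"
    unfolding eventually_at_right_field by (rule exI[of _ "1/(1+t2+w)"]) (use t w in auto)
  have key: "D (s * t1) (s * w) / s \<le> D (s * t2) (s * w) / s \<and>
      D (s * t2) (s * w) / s - D (s * t1) (s * w) / s \<le> t2 - t1"
    if s: "0 < s" "s < 1 / (1 + t2 + w)" for s
  proof -
    have lt: "s * (1 + t2 + w) < 1" using s t w by (simp add: field_simps)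
    have "s * t2 \<le> s * (1 + t2 + w)" by (rule mult_left_mono) (use s t w in auto)
    moreover have "s * w \<le> s * (1 + t2 + w)" by (rule mult_left_mono) (use s t w in auto)
    ultimately have a: "s * t2 \<le> 1" "s * w \<le> 1" using lt by linarith+
    have b: "0 \<le> s * t1" "s * t1 \<le> s * t2" "0 \<le> s * w"
      using s t w by (simp_all add: mult_left_mono)
    have m1: "D (s * t1) (s * w) \<le> D (s * t2) (s * w)"
      using c2_mono(1)[OF c b(3) a(2) b(1) b(2) a(1)] .
    have m2: "D (s * t2) (s * w) - D (s * t1) (s * w) \<le> s * t2 - s * t1"
      using c2_mono(2)[OF c b(3) a(2) b(1) b(2) a(1)] .
    have "D (s * t1) (s * w) / s \<le> D (s * t2) (s * w) / s"
      using m1 s by (intro divide_right_mono) auto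
    moreover have "D (s * t2) (s * w) / s - D (s * t1) (s * w) / s = (D (s * t2) (s * w) - D (s * t1) (s * w)) / s"
      by (simp add: diff_divide_distrib)
    moreover have "(D (s * t2) (s * w) - D (s * t1) (s * w)) / s \<le> (s * t2 - s * t1) / s"
      using m2 s by (intro divide_right_mono) auto
    moreover have "(s * t2 - s * t1) / s = t2 - t1" using s by (simp add: field_simps)
    ultimately show ?thesis by linarith
  qed
  have "tdf2 D t1 w \<le> tdf2 D t2 w"
    by (rule tendsto_le[OF _ l2 l1]) (auto intro: eventually_mono[OF ev] simp: key)
  moreover have "tdf2 D t2 w - tdf2 D t1 w \<le> t2 - t1"
    by (rule tendsto_le[OF _ tendsto_const tendsto_diff[OF l2 l1]]) (auto intro: eventually_mono[OF ev] simp: key)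
  ultimately show ?thesis by simp
qed

lemma tdf2_mlip:
  assumes c: "copula2 D" and h: "has_tdf2 D" and w: "0 \<le> w"
  shows "mlip (\<lambda>x. tdf2 D (max 0 x) w)"
  unfolding mlip_def
proof (intro allI impI)
  fix x y :: real assume "x \<le> y"
  then show "tdf2 D (max 0 x) w \<le> tdf2 D (max 0 y) w \<and> tdf2 D (max 0 y) w - tdf2 D (max 0 x) w \<le> y - x"
  proof -
    have h1: "0 \<le> max 0 x" "max 0 x \<le> max 0 y" "max 0 y - max 0 x \<le> y - x"
      using \<open>x \<le> y\<close> by auto
    have m1: "tdf2 D (max 0 x) w \<le> tdf2 D (max 0 y) w"
      and m2: "tdf2 D (max 0 y) w - tdf2 D (max 0 x) w \<le> max 0 y - max 0 x"
      using tdf2_mono[OF c h w h1(1) h1(2)] by auto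
    show ?thesis using m1 m2 h1(3) by linarith
  qed
qed


definition dv :: "(real \<Rightarrow> real) \<Rightarrow> real \<Rightarrow> real" where
  "dv g t = (if g differentiable (at t) then deriv g t else 0)"

lemma partial1_dv: "partial1 f t v = dv (\<lambda>x. f x v) t"
  by (simp add: partial1_def dv_def)

lemma mlip_abs: "mlip g \<Longrightarrow> \<bar>g y - g x\<bar> \<le> \<bar>y - x\<bar>"
  unfolding mlip_def
proof -
  assume m: "\<forall>x y. x \<le> y \<longrightarrow> g x \<le> g y \<and> g y - g x \<le> y - x"
  show ?thesis
  proof (cases "x \<le> y")
    case True then show ?thesis using m by auto
  next
    case False then have "y \<le> x" by simp
    then show ?thesis using m by auto
  qed
qed

lemma mlip_cont: "mlip g \<Longrightarrow> continuous_on UNIV g"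
proof -
  assume m: "mlip g"
  have "1-lipschitz_on UNIV g"
  proof (rule lipschitz_onI)
    fix x y :: real
    show "dist (g x) (g y) \<le> 1 * dist x y" using mlip_abs[OF m, of x y] by (simp add: dist_real_def)
  qed simp
  then show ?thesis by (rule lipschitz_on_continuous_on)
qed

lemma mlip_quot: "mlip g \<Longrightarrow> h \<noteq> 0 \<Longrightarrow> 0 \<le> (g (t + h) - g t) / h \<and> (g (t + h) - g t) / h \<le> 1"
proof -
  assume m: "mlip g" and h: "h \<noteq> 0"
  have m': "\<And>x y. x \<le> y \<Longrightarrow> g x \<le> g y \<and> g y - g x \<le> y - x" using m unfolding mlip_def by blast
  show ?thesis
  proof (cases "h > 0")
    case True
    have "g t \<le> g (t + h)" "g (t + h) - g t \<le> h" using m'[of t "t + h"] True by auto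
    then show ?thesis using True by (simp add: divide_le_eq_1)
  next
    case False
    then have hn: "h < 0" using h by simp
    have a: "g (t + h) \<le> g t" "g t - g (t + h) \<le> - h" using m'[of "t + h" t] hn by auto
    have "(g (t + h) - g t) / h = (g t - g (t + h)) / (- h)"
      by (metis minus_diff_eq minus_divide_divide)
    moreover have "0 \<le> (g t - g (t + h)) / (- h)" using a hn by (intro divide_nonneg_pos) auto
    moreover have "(g t - g (t + h)) / (- h) \<le> 1" using a hn by (subst pos_divide_le_eq) auto
    ultimately show ?thesis by simp
  qed
qed

lemma ev_at0: "(\<And>h. h \<noteq> 0 \<Longrightarrow> P h) \<Longrightarrow> eventually P (at (0::real))"
  unfolding eventually_at_filter by (intro always_eventually) auto

lemma mlip_dv: "mlip g \<Longrightarrow> 0 \<le> dv g t \<and> dv g t \<le> 1"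
proof (cases "g differentiable (at t)")
  case True
  assume m: "mlip g"
  have "DERIV g t :> deriv g t" using True by (simp add: DERIV_deriv_iff_real_differentiable)
  then have L: "((\<lambda>h. (g (t + h) - g t) / h) \<longlongrightarrow> deriv g t) (at 0)" by (simp add: DERIV_def)
  have "0 \<le> deriv g t"
    by (rule tendsto_lowerbound[OF L ev_at0]) (use mlip_quot[OF m] in auto)
  moreover have "deriv g t \<le> 1"
    by (rule tendsto_upperbound[OF L ev_at0]) (use mlip_quot[OF m] in auto)
  ultimately show ?thesis using True by (simp add: dv_def)
qed (simp add: dv_def)

lemma dv_local:
  assumes U: "open U" "t \<in> U" and fg: "\<And>x. x \<in> U \<Longrightarrow> f x = g x"
  shows "dv f t = dv g t"
proof -
  have gf: "\<And>x. x \<in> U \<Longrightarrow> g x = f x" using fg by simp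
  have fd: "DERIV g t :> D" if "DERIV f t :> D" for D
    by (rule has_field_derivative_transform_within_open[OF that U fg])
  have gd: "DERIV f t :> D" if "DERIV g t :> D" for D
    by (rule has_field_derivative_transform_within_open[OF that U gf])
  show ?thesis
  proof (cases "f differentiable (at t)")
    case True
    then have d: "DERIV f t :> deriv f t" by (simp add: DERIV_deriv_iff_real_differentiable)
    then have d2: "DERIV g t :> deriv f t" by (rule fd)
    then have "g differentiable (at t)" using real_differentiable_def by blast
    then show ?thesis using True DERIV_imp_deriv[OF d2] by (simp add: dv_def)
  next
    case False
    have "\<not> g differentiable (at t)"
    proof
      assume "g differentiable (at t)"
      then have "DERIV g t :> deriv g t" by (simp add: DERIV_deriv_iff_real_differentiable)
      then have "DERIV f t :> deriv g t" by (rule gd)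
      then have "f differentiable (at t)" using real_differentiable_def by blast
      then show False using False by simp
    qed
    then show ?thesis using False by (simp add: dv_def)
  qed
qed


lemma inv_suc_pos: "0 < inverse (real (Suc n))" by simp

lemma inv_suc_mono: "Suc n \<le> j \<Longrightarrow> inverse (real (Suc j)) < inverse (real (Suc n))"
  by (rule less_imp_inverse_less) auto

definition dq :: "(real \<Rightarrow> real) \<Rightarrow> real \<Rightarrow> real \<Rightarrow> real" where
  "dq g t h = (g (t + h) - g t) / h"

lemma diff_iff_cauchy0:
  fixes g :: "real \<Rightarrow> real" and Q
  assumes Q_def: "Q = dq g t"
  shows "g differentiable (at t) \<longleftrightarrow>
    (\<forall>m::nat. \<exists>n::nat. \<forall>h k. h \<noteq> 0 \<and> \<bar>h\<bar> < inverse (real (Suc n)) \<and> k \<noteq> 0 \<and> \<bar>k\<bar> < inverse (real (Suc n))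
        \<longrightarrow> \<bar>Q h - Q k\<bar> \<le> inverse (real (Suc m)))" (is "?L \<longleftrightarrow> ?R")
proof
  assume ?L
  then have "DERIV g t :> deriv g t" by (simp add: DERIV_deriv_iff_real_differentiable)
  then have L: "(Q \<longlongrightarrow> deriv g t) (at 0)" unfolding Q_def dq_def[abs_def] by (simp add: DERIV_def)
  show ?R
  proof
    fix m :: nat
    have r: "0 < inverse (real (Suc m)) / 2" by simp
    obtain s where s: "s > 0" and hs: "\<And>x. x \<noteq> 0 \<and> norm (x - 0) < s \<Longrightarrow> norm (Q x - deriv g t) < inverse (real (Suc m)) / 2"
      using L[unfolded LIM_eq, rule_format, OF r] by blast
    obtain n where n: "inverse (real (Suc n)) < s" using reals_Archimedean[OF s] by blast
    show "\<exists>n. \<forall>h k. h \<noteq> 0 \<and> \<bar>h\<bar> < inverse (real (Suc n)) \<and> k \<noteq> 0 \<and> \<bar>k\<bar> < inverse (real (Suc n))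
        \<longrightarrow> \<bar>Q h - Q k\<bar> \<le> inverse (real (Suc m))"
    proof (intro exI allI impI)
      fix h k assume hk: "h \<noteq> 0 \<and> \<bar>h\<bar> < inverse (real (Suc n)) \<and> k \<noteq> 0 \<and> \<bar>k\<bar> < inverse (real (Suc n))"
      have "\<bar>Q h - deriv g t\<bar> < inverse (real (Suc m)) / 2" using hs[of h] hk n by simp
      moreover have "\<bar>Q k - deriv g t\<bar> < inverse (real (Suc m)) / 2" using hs[of k] hk n by simp
      ultimately show "\<bar>Q h - Q k\<bar> \<le> inverse (real (Suc m))" by linarith
    qed
  qed
next
  assume R: ?R
  define a where "a j = Q (inverse (real (Suc j)))" for j
  have "Cauchy a"
    unfolding Cauchy_def
  proof (intro allI impI)
    fix e :: real assume e: "e > 0"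
    obtain m where m: "inverse (real (Suc m)) < e" using reals_Archimedean[OF e] by blast
    obtain n where n: "\<And>h k. h \<noteq> 0 \<and> \<bar>h\<bar> < inverse (real (Suc n)) \<and> k \<noteq> 0 \<and> \<bar>k\<bar> < inverse (real (Suc n))
        \<Longrightarrow> \<bar>Q h - Q k\<bar> \<le> inverse (real (Suc m))" using R by blast
    show "\<exists>M. \<forall>j\<ge>M. \<forall>l\<ge>M. dist (a j) (a l) < e"
    proof (intro exI allI impI)
      fix j l assume j: "Suc n \<le> j" and l: "Suc n \<le> l"
      have "\<bar>a j - a l\<bar> \<le> inverse (real (Suc m))" unfolding a_def
        by (rule n) (use inv_suc_mono[OF j] inv_suc_mono[OF l] in auto)
      then show "dist (a j) (a l) < e" using m by (simp add: dist_real_def)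
    qed
  qed
  then obtain Df where a: "a \<longlonglongrightarrow> Df" using Cauchy_convergent_iff convergent_def by blast
  have "(Q \<longlongrightarrow> Df) (at 0)"
    unfolding LIM_eq
  proof (intro allI impI)
    fix r :: real assume r: "r > 0"
    then have r2: "r / 2 > 0" by simp
    obtain m where m: "inverse (real (Suc m)) < r / 2" using reals_Archimedean[OF r2] by blast
    obtain n where n: "\<And>h k. h \<noteq> 0 \<and> \<bar>h\<bar> < inverse (real (Suc n)) \<and> k \<noteq> 0 \<and> \<bar>k\<bar> < inverse (real (Suc n))
        \<Longrightarrow> \<bar>Q h - Q k\<bar> \<le> inverse (real (Suc m))" using R by blast
    have "eventually (\<lambda>j. dist (a j) Df < r / 2) sequentially" using a r2 by (rule tendstoD)
    then obtain N where N: "\<And>j. j \<ge> N \<Longrightarrow> dist (a j) Df < r / 2" unfolding eventually_sequentially by blast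
    define j where "j = max N (Suc n)"
    have j1: "dist (a j) Df < r / 2" using N j_def by simp
    have j2: "inverse (real (Suc j)) < inverse (real (Suc n))" using inv_suc_mono[of n j] j_def by simp
    show "\<exists>s>0. \<forall>x. x \<noteq> 0 \<and> norm (x - 0) < s \<longrightarrow> norm (Q x - Df) < r"
    proof (intro exI conjI allI impI)
      show "0 < inverse (real (Suc n))" by simp
      fix x :: real assume x: "x \<noteq> 0 \<and> norm (x - 0) < inverse (real (Suc n))"
      have "\<bar>Q x - a j\<bar> \<le> inverse (real (Suc m))" unfolding a_def
        by (rule n) (use x j2 in auto)
      moreover have "\<bar>a j - Df\<bar> < r / 2" using j1 by (simp add: dist_real_def)
      ultimately have "\<bar>Q x - Df\<bar> < r" using m by linarith
      then show "norm (Q x - Df) < r" by simp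
    qed
  qed
  then have "DERIV g t :> Df" unfolding Q_def dq_def[abs_def] by (simp add: DERIV_def)
  then show ?L using real_differentiable_def by blast
qed

lemma closed_imp_const: "closed {t. \<phi> t \<le> (c::real)} \<Longrightarrow> closed {t. P \<longrightarrow> \<phi> t \<le> c}"
  by (cases P) auto

lemmas diff_iff_cauchy = diff_iff_cauchy0[OF refl]

lemma dv_meas:
  fixes g :: "real \<Rightarrow> real"
  assumes cont: "continuous_on UNIV g"
  shows "dv g \<in> borel_measurable borel"
proof -
  define Q where "Q t h = dq g t h" for t h
  define E where "E m n = {t. \<forall>h k. h \<noteq> 0 \<and> \<bar>h\<bar> < inverse (real (Suc n)) \<and> k \<noteq> 0 \<and> \<bar>k\<bar> < inverse (real (Suc n))
        \<longrightarrow> \<bar>Q t h - Q t k\<bar> \<le> inverse (real (Suc m))}" for m n :: nat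
  define D where "D = {t. \<forall>m. \<exists>n. t \<in> E m n}"
  have cg: "continuous_on UNIV (\<lambda>t. g (t + h))" for h
    by (rule continuous_on_compose2[OF cont]) (auto intro!: continuous_intros)
  have cQ: "continuous_on UNIV (\<lambda>t. Q t h)" for h
    unfolding Q_def dq_def divide_inverse by (intro continuous_intros cg cont)
  have closedE: "closed (E m n)" for m n
  proof -
    have cl1: "closed {t. (h \<noteq> 0 \<and> \<bar>h\<bar> < inverse (real (Suc n)) \<and> k \<noteq> 0 \<and> \<bar>k\<bar> < inverse (real (Suc n)))
        \<longrightarrow> \<bar>Q t h - Q t k\<bar> \<le> inverse (real (Suc m))}" for h k
      by (rule closed_imp_const) (intro closed_Collect_le continuous_intros cQ)
    have "E m n = (\<Inter>h. \<Inter>k. {t. (h \<noteq> 0 \<and> \<bar>h\<bar> < inverse (real (Suc n)) \<and> k \<noteq> 0 \<and> \<bar>k\<bar> < inverse (real (Suc n)))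
        \<longrightarrow> \<bar>Q t h - Q t k\<bar> \<le> inverse (real (Suc m))})"
      unfolding E_def by blast
    then show ?thesis using cl1 by (simp add: closed_INT)
  qed
  have [measurable]: "E m n \<in> sets borel" for m n using closedE by (rule borel_closed)
  have "D = (\<Inter>m. \<Union>n. E m n)" unfolding D_def by blast
  also have "\<dots> \<in> sets borel" by measurable
  finally have Dm[measurable]: "D \<in> sets borel" .
  have diffD: "g differentiable (at t) \<longleftrightarrow> t \<in> D" for t
    unfolding D_def E_def Q_def mem_Collect_eq by (rule diff_iff_cauchy)
  define f where "f j t = indicator D t * Q t (inverse (real (Suc j)))" for j t
  have fm: "f j \<in> borel_measurable borel" for j
  proof -
    have "(\<lambda>t. Q t (inverse (real (Suc j)))) \<in> borel_measurable borel"
      by (rule borel_measurable_continuous_onI[OF cQ])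
    then show ?thesis unfolding f_def by measurable
  qed
  have lim: "(\<lambda>j. f j t) \<longlonglongrightarrow> dv g t" for t
  proof (cases "t \<in> D")
    case True
    then have dif: "g differentiable (at t)" using diffD by simp
    then have "DERIV g t :> deriv g t" by (simp add: DERIV_deriv_iff_real_differentiable)
    then have L: "((\<lambda>h. Q t h) \<longlongrightarrow> deriv g t) (at 0)" unfolding Q_def dq_def by (simp add: DERIV_def)
    have "(\<lambda>j. Q t (inverse (real (Suc j)))) \<longlonglongrightarrow> deriv g t"
      using L[folded LIMSEQ_SEQ_conv] LIMSEQ_inverse_real_of_nat by simp
    then show ?thesis using True dif by (simp add: f_def dv_def)
  next
    case False
    then have "\<not> g differentiable (at t)" using diffD by simp
    then show ?thesis using False by (simp add: f_def dv_def)
  qed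
  show ?thesis by (rule borel_measurable_LIMSEQ_real[OF lim fm])
qed


definition Ccl :: "(('d::finite \<Rightarrow> real) \<Rightarrow> real) \<Rightarrow> ('d \<Rightarrow> real) \<Rightarrow> real" where
  "Ccl C u = C (\<lambda>i. cl (u i))"

lemma cl_lip: "\<bar>cl a - cl b\<bar> \<le> \<bar>a - b\<bar>"
  by (auto simp: cl_def)

lemma cl_cube: "(\<lambda>i. cl (u i)) \<in> unit_cube"
  by (simp add: unit_cube_def cl_props)

lemma Ccl_eq: "u \<in> unit_cube \<Longrightarrow> Ccl C u = C u"
proof -
  assume "u \<in> unit_cube"
  then have "(\<lambda>i. cl (u i)) = u" by (intro ext) (simp add: unit_cube_def cl_props)
  then show ?thesis by (simp add: Ccl_def)
qed

lemma Ccl_cont: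
  fixes C :: "('d::finite \<Rightarrow> real) \<Rightarrow> real"
  assumes cop: "copula C"
  shows "continuous_on UNIV (Ccl C)"
proof -
  have "isCont (Ccl C) x" for x
  proof -
    have proj: "((\<lambda>y. y i) \<longlongrightarrow> x i) (at x)" for i
    proof -
      have "continuous_on UNIV (\<lambda>y::'d \<Rightarrow> real. y i)" by simp
      then have "isCont (\<lambda>y::'d \<Rightarrow> real. y i) x"
        using continuous_on_eq_continuous_at[OF open_UNIV] by blast
      then show ?thesis by (simp add: isCont_def)
    qed
    have g: "((\<lambda>y. \<Sum>i\<in>UNIV. \<bar>y i - x i\<bar>) \<longlongrightarrow> (\<Sum>i\<in>UNIV. \<bar>x i - x i\<bar>)) (at x)"
      by (intro tendsto_sum tendsto_rabs tendsto_diff proj tendsto_const)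
    have bnd: "norm (Ccl C y - Ccl C x) \<le> (\<Sum>i\<in>UNIV. \<bar>y i - x i\<bar>)" for y
    proof -
      have "\<bar>Ccl C y - Ccl C x\<bar> \<le> (\<Sum>i\<in>UNIV. \<bar>cl (y i) - cl (x i)\<bar>)"
        unfolding Ccl_def by (rule cop_lip[OF cop cl_cube cl_cube])
      also have "\<dots> \<le> (\<Sum>i\<in>UNIV. \<bar>y i - x i\<bar>)" by (intro sum_mono cl_lip)
      finally show ?thesis by simp
    qed
    have "((\<lambda>y. Ccl C y - Ccl C x) \<longlongrightarrow> 0) (at x)"
      by (rule Lim_null_comparison[OF always_eventually]) (use bnd g in auto)
    then show ?thesis unfolding isCont_def by (rule LIM_zero_cancel)
  qed
  then show ?thesis using continuous_on_eq_continuous_at[OF open_UNIV] by blast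
qed

lemma Ccl_meas:
  fixes C :: "('d::finite \<Rightarrow> real) \<Rightarrow> real"
  assumes cop: "copula C" and m: "\<And>i. (\<lambda>t. \<phi> i t) \<in> borel_measurable M"
  shows "(\<lambda>t. Ccl C (\<lambda>i. \<phi> i t)) \<in> borel_measurable M"
proof -
  have "(\<lambda>t. (\<lambda>i. \<phi> i t)) \<in> borel_measurable M"
    by (rule measurable_coordinatewise_then_product) (rule m)
  then show ?thesis by (rule borel_measurable_continuous_on[OF Ccl_cont[OF cop]])
qed


lemma Ccl_bound:
  fixes C :: "('d::finite \<Rightarrow> real) \<Rightarrow> real"
  assumes cop: "copula C"
  shows "\<bar>Ccl C u\<bar> \<le> 1"
proof -
  have "\<bar>Ccl C u\<bar> \<le> cl (u undefined)" unfolding Ccl_def using cop_bound[OF cop cl_cube] by simp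
  then show ?thesis using cl_props(2)[of "u undefined"] by linarith
qed

lemma sum_ind_single:
  fixes f :: "real \<Rightarrow> real"
  assumes "finite F"
  shows "(\<Sum>c\<in>F. indicator {c} x * f c) = (if x \<in> F then f x else 0)"
proof -
  have "(\<Sum>c\<in>F. indicator {c} x * f c) = (\<Sum>c\<in>F. if x = c then f c else 0)"
    by (intro sum.cong) (auto simp: indicator_def)
  also have "\<dots> = (if x \<in> F then f x else 0)" using assms by (simp add: sum.delta)
  finally show ?thesis .
qed

lemma meas_finmod:
  fixes f g :: "real \<Rightarrow> real"
  assumes gm: "g \<in> borel_measurable borel" and F: "finite F" and fg: "\<And>x. x \<notin> F \<Longrightarrow> f x = g x"
  shows "f \<in> borel_measurable borel"
proof -
  have "f = (\<lambda>x. g x + (\<Sum>c\<in>F. indicator {c} x * (f c - g c)))"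
  proof
    fix x show "f x = g x + (\<Sum>c\<in>F. indicator {c} x * (f c - g c))"
      using sum_ind_single[OF F, of x "\<lambda>c. f c - g c"] fg[of x] by (cases "x \<in> F") auto
  qed
  also have "\<dots> \<in> borel_measurable borel" using gm by measurable
  finally show ?thesis .
qed

lemma AE_finite_lborel: "finite F \<Longrightarrow> AE x in lborel. (x::real) \<notin> F"
  by (rule AE_not_in[OF finite_imp_null_set_lborel])

lemma int_finmod:
  fixes f g :: "real \<Rightarrow> real"
  assumes gm: "g \<in> borel_measurable borel" and F: "finite F" and fg: "\<And>x. x \<notin> F \<Longrightarrow> f x = g x"
  shows "integral\<^sup>L lborel f = integral\<^sup>L lborel g" "integrable lborel f \<longleftrightarrow> integrable lborel g"
proof -
  have fm: "f \<in> borel_measurable borel" by (rule meas_finmod[OF gm F fg])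
  have ae: "AE x in lborel. f x = g x" using AE_finite_lborel[OF F] by eventually_elim (use fg in auto)
  show "integral\<^sup>L lborel f = integral\<^sup>L lborel g" by (rule integral_cong_AE) (use fm gm ae in auto)
  show "integrable lborel f \<longleftrightarrow> integrable lborel g" by (rule integrable_cong_AE) (use fm gm ae in auto)
qed

theorem mainTheorem3:
  fixes C :: "('d::finite \<Rightarrow> real) \<Rightarrow> real"
    and Cs :: "'d \<Rightarrow> real \<Rightarrow> real \<Rightarrow> real"
    and w :: "'d \<Rightarrow> real"
  assumes "copula C"
    and "\<And>i. copula2 (Cs i)"
    and "\<And>i. has_tdf2 (Cs i)"
    and "\<And>i w. w \<ge> 0 \<Longrightarrow>
           ((\<lambda>s. \<integral>\<^sup>+ t. ennreal \<bar>partial1 (Cs i) (s * t) (s * w) * indicator {0..1/s} t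
                                 - partial1 (tdf2 (Cs i)) t w\<bar> * indicator {0..} t \<partial>lborel)
             \<longlongrightarrow> 0) (at_right 0)"
    and "\<And>i. w i \<ge> 0"
  shows "((\<lambda>s. markov_prod C Cs (\<lambda>i. s * w i) / s)
           \<longlongrightarrow> markov_prod_tdf C (\<lambda>i. tdf2 (Cs i)) w) (at_right 0)"
proof -
  note cop = assms(1) and c2 = assms(2) and td = assms(3) and hyp = assms(4) and wpos = assms(5)
  define Pc where "Pc i t v = dv (\<lambda>x. Cs i (cl x) v) t" for i t v
  define Rc where "Rc i t = dv (\<lambda>x. tdf2 (Cs i) (max 0 x) (w i)) t" for i t
  define W where "W = (\<Sum>i\<in>UNIV. w i)"
  define s0 where "s0 = 1 / (W + 1)"
  have W0: "0 \<le> W" using wpos unfolding W_def by (simp add: sum_nonneg)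
  have s0: "0 < s0" using W0 unfolding s0_def by simp
  have wle: "w i \<le> W" for i unfolding W_def by (rule member_le_sum) (use wpos in auto)
  have sw: "0 \<le> s * w i \<and> s * w i \<le> 1" if s: "0 < s" "s < s0" for s i
  proof -
    have "s * w i \<le> s0 * W" using s wle[of i] wpos[of i] W0 by (intro mult_mono) auto
    also have "s0 * W \<le> 1" unfolding s0_def using W0 by simp
    finally show ?thesis using s wpos[of i] by simp
  qed
  have Pc_b: "0 \<le> Pc i t v \<and> Pc i t v \<le> 1" if "0 \<le> v" "v \<le> 1" for i t v
    unfolding Pc_def by (rule mlip_dv[OF c2_mlip[OF c2 that]])
  have Rc_b: "0 \<le> Rc i t \<and> Rc i t \<le> 1" for i t
    unfolding Rc_def by (rule mlip_dv[OF tdf2_mlip[OF c2 td wpos]])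
  have Pc_m: "(\<lambda>t. Pc i t v) \<in> borel_measurable borel" if "0 \<le> v" "v \<le> 1" for i v
    unfolding Pc_def by (rule dv_meas[OF mlip_cont[OF c2_mlip[OF c2 that]]])
  have Pc_ms: "(\<lambda>t. Pc i (s * t) v) \<in> borel_measurable borel" if "0 \<le> v" "v \<le> 1" for i v s
  proof -
    have "(\<lambda>t. s * t) \<in> borel_measurable borel" by measurable
    then show ?thesis by (rule measurable_compose[OF _ Pc_m[OF that]])
  qed
  have Rc_m: "(\<lambda>t. Rc i t) \<in> borel_measurable borel" for i
    unfolding Rc_def by (rule dv_meas[OF mlip_cont[OF tdf2_mlip[OF c2 td wpos]]])
  have P_loc: "partial1 (Cs i) t v = Pc i t v" if "0 < t" "t < 1" for i t v
    unfolding partial1_dv Pc_def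
    by (rule dv_local[of "{0<..<1}"]) (use that in \<open>auto simp: cl_props(5)\<close>)
  have R_loc: "partial1 (tdf2 (Cs i)) t (w i) = Rc i t" if "0 < t" for i t
    unfolding partial1_dv Rc_def
    by (rule dv_local[of "{0<..}"]) (use that in auto)
  have Rc_cube: "(\<lambda>i. Rc i t) \<in> unit_cube" for t using Rc_b by (simp add: unit_cube_def)
  have Pc_cube: "(\<lambda>i. Pc i t (s * w i)) \<in> unit_cube" if "0 < s" "s < s0" for s t
    using Pc_b sw[OF that] by (simp add: unit_cube_def)

  define U where "U s t = indicator {0..1/s} t * Ccl C (\<lambda>i. Pc i (s * t) (s * w i))" for s t
  define V where "V t = indicator {0..} t * Ccl C (\<lambda>i. Rc i t)" for t
  define H where "H i s t = \<bar>Pc i (s * t) (s * w i) * indicator {0..1/s} t - Rc i t\<bar> * indicator {0..} t" for i s t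
  define G where "G i s = (\<integral>\<^sup>+ t. ennreal \<bar>partial1 (Cs i) (s * t) (s * w i) * indicator {0..1/s} t
                                 - partial1 (tdf2 (Cs i)) t (w i)\<bar> * indicator {0..} t \<partial>lborel)" for i s
  have H_nn: "0 \<le> H i s t" for i s t unfolding H_def by simp

  have U_m: "U s \<in> borel_measurable borel" if "0 < s" "s < s0" for s
  proof -
    have "(\<lambda>t. Ccl C (\<lambda>i. Pc i (s * t) (s * w i))) \<in> borel_measurable borel"
      by (rule Ccl_meas[OF cop]) (use Pc_ms sw[OF that] in auto)
    then show ?thesis unfolding U_def[abs_def] by measurable
  qed
  have V_m: "V \<in> borel_measurable borel"
  proof -
    have "(\<lambda>t. Ccl C (\<lambda>i. Rc i t)) \<in> borel_measurable borel"
      by (rule Ccl_meas[OF cop]) (use Rc_m in auto)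
    then show ?thesis unfolding V_def[abs_def] by measurable
  qed
  have H_m: "(\<lambda>t. H i s t) \<in> borel_measurable borel" if "0 < s" "s < s0" for i s
  proof -
    have "(\<lambda>t. Pc i (s * t) (s * w i)) \<in> borel_measurable borel" using Pc_ms sw[OF that] by auto
    moreover note Rc_m[of i]
    ultimately show ?thesis unfolding H_def by measurable
  qed

  have I: "markov_prod C Cs (\<lambda>i. s * w i) / s = integral\<^sup>L lborel (U s)" if s: "0 < s" "s < s0" for s
  proof -
    define Gf where "Gf t = indicator {0..1} t * Ccl C (\<lambda>i. Pc i t (s * w i))" for t
    have Gf_m: "Gf \<in> borel_measurable borel"
    proof -
      have "(\<lambda>t. Ccl C (\<lambda>i. Pc i t (s * w i))) \<in> borel_measurable borel"
        by (rule Ccl_meas[OF cop]) (use Pc_m sw[OF s] in auto)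
      then show ?thesis unfolding Gf_def[abs_def] by measurable
    qed
    have eq1: "indicator {0..1} t *\<^sub>R C (\<lambda>i. partial1 (Cs i) t (s * w i)) = Gf t" if "t \<notin> {0, 1}" for t
    proof (cases "0 < t \<and> t < 1")
      case True
      then have "(\<lambda>i. partial1 (Cs i) t (s * w i)) = (\<lambda>i. Pc i t (s * w i))" using P_loc by auto
      then show ?thesis unfolding Gf_def using Ccl_eq[OF Pc_cube[OF s, of t]] by simp
    next
      case False
      then have "t \<notin> {0..1}" using that by auto
      then show ?thesis unfolding Gf_def by simp
    qed
    have "markov_prod C Cs (\<lambda>i. s * w i) = integral\<^sup>L lborel Gf"
      unfolding markov_prod_def set_lebesgue_integral_def
      by (rule int_finmod(1)[where F="{0,1}", OF Gf_m _ eq1]) auto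
    also have "\<dots> = \<bar>s\<bar> *\<^sub>R integral\<^sup>L lborel (\<lambda>t. Gf (0 + s * t))"
      by (rule lborel_integral_real_affine) (use s in auto)
    also have "(\<lambda>t. Gf (0 + s * t)) = U s"
    proof
      fix t
      have "(s * t \<in> {0..1}) = (t \<in> {0..1/s})" using s by (auto simp: zero_le_mult_iff pos_le_divide_eq mult.commute)
      then show "Gf (0 + s * t) = U s t" unfolding Gf_def U_def by (simp add: indicator_def)
    qed
    finally show ?thesis using s by simp
  qed

  have II: "markov_prod_tdf C (\<lambda>i. tdf2 (Cs i)) w = integral\<^sup>L lborel V"
  proof -
    have eq2: "indicator {0..} t *\<^sub>R C (\<lambda>i. partial1 (tdf2 (Cs i)) t (w i)) = V t" if "t \<notin> {0}" for t
    proof (cases "0 < t")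
      case True
      then have "(\<lambda>i. partial1 (tdf2 (Cs i)) t (w i)) = (\<lambda>i. Rc i t)" using R_loc by auto
      then show ?thesis unfolding V_def using Ccl_eq[OF Rc_cube[of t]] True by simp
    next
      case False
      then have "t \<notin> {0..}" using that by auto
      then show ?thesis unfolding V_def by simp
    qed
    show ?thesis unfolding markov_prod_tdf_def set_lebesgue_integral_def
      by (rule int_finmod(1)[where F="{0}", OF V_m _ eq2]) auto
  qed

  have III: "G i s = (\<integral>\<^sup>+ t. ennreal (H i s t) \<partial>lborel)" if s: "0 < s" "s < s0" for i s
    unfolding G_def
  proof (rule nn_integral_cong_AE)
    have fin: "AE t in lborel. t \<notin> {0, 1/s}" using AE_finite_lborel[of "{0, 1/s}"] by simp
    show "AE t in lborel. ennreal \<bar>partial1 (Cs i) (s * t) (s * w i) * indicator {0..1/s} t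
                                 - partial1 (tdf2 (Cs i)) t (w i)\<bar> * indicator {0..} t = ennreal (H i s t)"
      using fin
    proof eventually_elim
      case (elim t)
      show ?case
      proof (cases "0 < t")
        case False
        then have "t < 0" using elim by auto
        then show ?thesis unfolding H_def by (simp add: indicator_def)
      next
        case True
        have R: "partial1 (tdf2 (Cs i)) t (w i) = Rc i t" by (rule R_loc[OF True])
        have P: "partial1 (Cs i) (s * t) (s * w i) * indicator {0..1/s} t = Pc i (s * t) (s * w i) * indicator {0..1/s} t"
        proof (cases "t < 1/s")
          case True
          have "s * t < 1" using True s by (simp add: less_divide_eq mult.commute)
          then show ?thesis using P_loc[of "s * t" i] s \<open>0 < t\<close> by simp
        next
          case False
          then have "t > 1/s" using elim by auto
          then show ?thesis by (simp add: indicator_def)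
        qed
        have "ennreal \<bar>partial1 (Cs i) (s * t) (s * w i) * indicator {0..1/s} t
                                 - partial1 (tdf2 (Cs i)) t (w i)\<bar> * indicator {0..} t
            = ennreal \<bar>Pc i (s * t) (s * w i) * indicator {0..1/s} t - Rc i t\<bar> * indicator {0..} t"
          by (simp only: R P)
        also have "\<dots> = ennreal (H i s t)" unfolding H_def using True by (simp add: indicator_def)
        finally show ?thesis .
      qed
    qed
  qed

  obtain k :: 'd where True by simp
  have evs: "\<forall>\<^sub>F s in at_right 0. 0 < s \<and> s < s0"
    unfolding eventually_at_right_field by (rule exI[of _ s0]) (use s0 in auto)
  have evG: "\<forall>\<^sub>F s in at_right 0. G k s < 1"
    using order_tendstoD(2)[OF hyp[OF wpos[of k]]] unfolding G_def by simp
  obtain s1 where s1: "0 < s1" "s1 < s0" "G k s1 < 1"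
    using eventually_happens[OF eventually_conj[OF evs evG]] by auto
  have intV: "integrable lborel V"
  proof -
    have b1: "Rc k t * indicator {0..} t \<le> H k s1 t + indicator {0..1/s1} t" for t
    proof (cases "0 \<le> t")
      case False then show ?thesis using H_nn[of k s1 t] by simp
    next
      case True
      have p: "0 \<le> Pc k (s1 * t) (s1 * w k) \<and> Pc k (s1 * t) (s1 * w k) \<le> 1" using Pc_b sw[OF s1(1,2)] by auto
      have q: "0 \<le> (indicator {0..1/s1} t :: real)" "(indicator {0..1/s1} t :: real) \<le> 1" by (auto simp: indicator_def)
      have "Pc k (s1 * t) (s1 * w k) * indicator {0..1/s1} t \<le> indicator {0..1/s1} t"
        using p q mult_right_le_one_le[of "indicator {0..1/s1} t" "Pc k (s1 * t) (s1 * w k)"]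
        by (simp add: mult.commute)
      then show ?thesis using True unfolding H_def by simp
    qed
    have "(\<integral>\<^sup>+ t. ennreal (Rc k t * indicator {0..} t) \<partial>lborel)
        \<le> (\<integral>\<^sup>+ t. ennreal (H k s1 t) + ennreal (indicator {0..1/s1} t) \<partial>lborel)"
      by (rule nn_integral_mono) (use b1 H_nn in \<open>simp add: ennreal_plus[symmetric] del: ennreal_plus\<close>)
    also have "\<dots> = (\<integral>\<^sup>+ t. ennreal (H k s1 t) \<partial>lborel) + (\<integral>\<^sup>+ t. ennreal (indicator {0..1/s1} t) \<partial>lborel)"
      by (rule nn_integral_add) (use H_m[OF s1(1,2)] in auto)
    also have "\<dots> = G k s1 + ennreal (1/s1)"
      using III[OF s1(1,2)] s1 by (simp add: ennreal_indicator)
    also have "\<dots> < \<infinity>"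
    proof -
      have "G k s1 < \<infinity>" using less_trans[OF s1(3) ennreal_one_less_top] by simp
      then show ?thesis by (simp add: ennreal_less_top)
    qed
    finally have fin: "(\<integral>\<^sup>+ t. ennreal (Rc k t * indicator {0..} t) \<partial>lborel) < \<infinity>" .
    have intR: "integrable lborel (\<lambda>t. Rc k t * indicator {0..} t)"
      by (rule integrableI_nonneg) (use fin Rc_m[of k] Rc_b in auto)
    show ?thesis
    proof (rule Bochner_Integration.integrable_bound[OF intR V_m[folded measurable_lborel2]])
      show "AE t in lborel. norm (V t) \<le> norm (Rc k t * indicator {0..} t)"
      proof (rule AE_I2)
        fix t
        have "\<bar>C (\<lambda>i. Rc i t)\<bar> \<le> Rc k t" by (rule cop_bound[OF cop Rc_cube])
        then show "norm (V t) \<le> norm (Rc k t * indicator {0..} t)"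
          unfolding V_def using Ccl_eq[OF Rc_cube[of t]] Rc_b[of k t] by (simp add: indicator_def)
      qed
    qed
  qed

  have intU: "integrable lborel (U s)" if s: "0 < s" "s < s0" for s
  proof (rule Bochner_Integration.integrable_bound[OF _ U_m[OF s, folded measurable_lborel2]])
    show "integrable lborel (indicator {0..1/s} :: real \<Rightarrow> real)"
      using s by (simp add: integrable_indicator_iff)
    show "AE t in lborel. norm (U s t) \<le> norm (indicator {0..1/s} t :: real)"
      by (rule AE_I2) (use Ccl_bound[OF cop] in \<open>auto simp: U_def indicator_def\<close>)
  qed

  have VI: "ennreal \<bar>integral\<^sup>L lborel (U s) - integral\<^sup>L lborel V\<bar> \<le> (\<Sum>i\<in>UNIV. G i s)"
    if s: "0 < s" "s < s0" for s
  proof -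
    have pt: "\<bar>U s t - V t\<bar> \<le> (\<Sum>i\<in>UNIV. H i s t)" for t
    proof (cases "0 \<le> t")
      case False
      then show ?thesis unfolding U_def V_def using H_nn by (simp add: sum_nonneg)
    next
      case True
      show ?thesis
      proof (cases "t \<le> 1/s")
        case True
        have "\<bar>C (\<lambda>i. Pc i (s * t) (s * w i)) - C (\<lambda>i. Rc i t)\<bar> \<le> (\<Sum>i\<in>UNIV. \<bar>Pc i (s * t) (s * w i) - Rc i t\<bar>)"
          by (rule cop_lip[OF cop Pc_cube[OF s] Rc_cube])
        then show ?thesis unfolding U_def V_def H_def
          using True \<open>0 \<le> t\<close> Ccl_eq[OF Pc_cube[OF s]] Ccl_eq[OF Rc_cube] by simp
      next
        case False
        have "\<bar>C (\<lambda>i. Rc i t)\<bar> \<le> Rc k t" by (rule cop_bound[OF cop Rc_cube])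
        also have "Rc k t \<le> (\<Sum>i\<in>UNIV. Rc i t)" by (rule member_le_sum) (use Rc_b in auto)
        finally show ?thesis unfolding U_def V_def H_def
          using False \<open>0 \<le> t\<close> Ccl_eq[OF Rc_cube] Rc_b by simp
      qed
    qed
    have "\<bar>integral\<^sup>L lborel (U s) - integral\<^sup>L lborel V\<bar> = norm (integral\<^sup>L lborel (\<lambda>t. U s t - V t))"
      using Bochner_Integration.integral_diff[OF intU[OF s] intV] by simp
    then have "ennreal \<bar>integral\<^sup>L lborel (U s) - integral\<^sup>L lborel V\<bar> \<le> (\<integral>\<^sup>+ t. ennreal (norm (U s t - V t)) \<partial>lborel)"
      using integral_norm_bound_ennreal[OF Bochner_Integration.integrable_diff[OF intU[OF s] intV]] by simp
    also have "\<dots> \<le> (\<integral>\<^sup>+ t. (\<Sum>i\<in>UNIV. ennreal (H i s t)) \<partial>lborel)"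
      by (rule nn_integral_mono) (use pt H_nn in \<open>auto simp: sum_ennreal intro!: ennreal_leI\<close>)
    also have "\<dots> = (\<Sum>i\<in>UNIV. (\<integral>\<^sup>+ t. ennreal (H i s t) \<partial>lborel))"
      by (rule nn_integral_sum) (use H_m[OF s] in auto)
    also have "\<dots> = (\<Sum>i\<in>UNIV. G i s)" using III[OF s] by simp
    finally show ?thesis .
  qed

  define F where "F s = markov_prod C Cs (\<lambda>i. s * w i) / s" for s
  define L where "L = markov_prod_tdf C (\<lambda>i. tdf2 (Cs i)) w"
  have ev: "\<forall>\<^sub>F s in at_right 0. ennreal \<bar>F s - L\<bar> \<le> (\<Sum>i\<in>UNIV. G i s)"
    using evs by eventually_elim (auto simp: F_def L_def I II VI)
  have Glim: "((\<lambda>s. \<Sum>i\<in>UNIV. G i s) \<longlongrightarrow> 0) (at_right 0)"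
  proof -
    have "((\<lambda>s. \<Sum>i\<in>UNIV. G i s) \<longlongrightarrow> (\<Sum>i\<in>(UNIV::'d set). 0)) (at_right 0)"
      by (intro tendsto_sum) (unfold G_def, rule hyp[OF wpos])
    then show ?thesis by simp
  qed
  have "((\<lambda>s. ennreal \<bar>F s - L\<bar>) \<longlongrightarrow> 0) (at_right 0)"
    by (rule tendsto_sandwich[OF _ ev tendsto_const Glim]) simp
  then have "((\<lambda>s. ennreal \<bar>F s - L\<bar>) \<longlongrightarrow> ennreal 0) (at_right 0)" by simp
  then have "((\<lambda>s. \<bar>F s - L\<bar>) \<longlongrightarrow> 0) (at_right 0)"
    by (subst (asm) tendsto_ennreal_iff) auto
  then have "((\<lambda>s. F s - L) \<longlongrightarrow> 0) (at_right 0)" by (simp add: tendsto_rabs_zero_iff)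
  then have "(F \<longlongrightarrow> L) (at_right 0)" by (simp add: LIM_zero_iff)
  then show ?thesis unfolding F_def L_def .
qed

end
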